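(* For any $n\in\mathbb{N}, l\in\mathbb{Z}, Q\in\mathbb{C}[K^{\pm1},C_1]$, we have $u(n,l,Q)=q^{2nl}K_2^{l}g^nQv_\eta$, where $$g=F_2(1-q^{-2}K_2^{2}K^{-2})+\alpha(1-q^{-2})F_3K^{-1}.$$
   Context: Let $q\in\mathbb{C}$ be nonzero and not a root of unity, and $U=U_q(\mathfrak{sl}_3)$ the algebra generated by $E_1,E_2,F_1,F_2,K_1^{\pm1},K_2^{\pm1}$ with the Jimbo relations. Put $F_3=F_1F_2-qF_2F_1$, $K=K_1K_2^2$, $C_1=F_1E_1+\frac{qK_1+q^{-1}K_1^{-1}}{(q-q^{-1})^2}$. Let $U^+$ be the subalgebra generated by $E_1,E_2$, $\eta:U^+\to\mathbb{C}$ the algebra homomorphism with $\eta(E_1)=\alpha\neq0$, $\eta(E_2)=0$, and $M(\eta)=U\otimes_{U^+}\mathbb{C}v_\eta$ with $xv_\eta=\eta(x)v_\eta$. Write $[k]=\frac{q^k-q^{-k}}{q-q^{-1}}$, $[k]!=[k]\cdots[1]$, $[0]!=1$, $\genfrac{[}{]}{0pt}{}{n}{k}=\frac{[n]!}{[k]![n-k]!}$ for $0\le k\le n$ (0 otherwise). For $n\in\mathbb{Z}_+$, $l\in\mathbb{Z}$, $Q\in\mathbb{C}[K^{\pm1},C_1]$, $u(n,l,Q)=q^{2nl}K_2^l\sum_{k=0}^{n}\sum_{j=0}^{n-k}a_{kj}(n)F_2^{n-k}F_3^kK_2^{2j}K^{-2j-k}Qv_\eta$ with $a_{kj}(n)=(-1)^j\alpha^k(q^2-1)^kq^{j(n-3)}q^{\frac{1}{2}k(2n+2j+k-7)}\genfrac{[}{]}{0pt}{}{n}{k}\genfrac{[}{]}{0pt}{}{n-k}{j}$.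 *)

theory Defs
  imports Complex_Main
begin

definition qint :: "complex \<Rightarrow> nat \<Rightarrow> complex" where
  "qint q k = (q ^ k - inverse q ^ k) / (q - inverse q)"

definition qfact :: "complex \<Rightarrow> nat \<Rightarrow> complex" where
  "qfact q n = (\<Prod>i\<in>{1..n}. qint q i)"

definition qbinom :: "complex \<Rightarrow> nat \<Rightarrow> nat \<Rightarrow> complex" where
  "qbinom q n k = (if k \<le> n then qfact q n / (qfact q k * qfact q (n - k)) else 0)"

definition zpow :: "'a::monoid_mult \<Rightarrow> 'a \<Rightarrow> int \<Rightarrow> 'a" where
  "zpow x xi m = (if 0 \<le> m then x ^ nat m else xi ^ nat (- m))"

text \<open>iota embeds the scalars C centrally into the ring 'a, i.e. 'a is a C-algebra.\<close>
definition scalar_embedding :: "(complex \<Rightarrow> 'a::ring_1) \<Rightarrow> bool" where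
  "scalar_embedding \<iota> \<longleftrightarrow>
     (\<forall>a b. \<iota> (a + b) = \<iota> a + \<iota> b) \<and>
     (\<forall>a b. \<iota> (a * b) = \<iota> a * \<iota> b) \<and>
     \<iota> 1 = 1 \<and>
     (\<forall>c x. \<iota> c * x = x * \<iota> c)"

definition jimbo_sl3 ::
  "complex \<Rightarrow> (complex \<Rightarrow> 'a::ring_1) \<Rightarrow> 'a \<Rightarrow> 'a \<Rightarrow> 'a \<Rightarrow> 'a \<Rightarrow> 'a \<Rightarrow> 'a \<Rightarrow> 'a \<Rightarrow> 'a \<Rightarrow> bool" where
  "jimbo_sl3 q \<iota> E1 E2 F1 F2 K1 K1i K2 K2i \<longleftrightarrow>
     K1 * K1i = 1 \<and> K1i * K1 = 1 \<and> K2 * K2i = 1 \<and> K2i * K2 = 1 \<and> K1 * K2 = K2 * K1 \<and>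
     K1 * E1 * K1i = \<iota> (q ^ 2) * E1 \<and> K1 * E2 * K1i = \<iota> (inverse q) * E2 \<and>
     K2 * E1 * K2i = \<iota> (inverse q) * E1 \<and> K2 * E2 * K2i = \<iota> (q ^ 2) * E2 \<and>
     K1 * F1 * K1i = \<iota> (inverse q ^ 2) * F1 \<and> K1 * F2 * K1i = \<iota> q * F2 \<and>
     K2 * F1 * K2i = \<iota> q * F1 \<and> K2 * F2 * K2i = \<iota> (inverse q ^ 2) * F2 \<and>
     E1 * F1 - F1 * E1 = \<iota> (1 / (q - inverse q)) * (K1 - K1i) \<and>
     E2 * F2 - F2 * E2 = \<iota> (1 / (q - inverse q)) * (K2 - K2i) \<and>
     E1 * F2 = F2 * E1 \<and> E2 * F1 = F1 * E2 \<and>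
     E1 ^ 2 * E2 - \<iota> (q + inverse q) * E1 * E2 * E1 + E2 * E1 ^ 2 = 0 \<and>
     E2 ^ 2 * E1 - \<iota> (q + inverse q) * E2 * E1 * E2 + E1 * E2 ^ 2 = 0 \<and>
     F1 ^ 2 * F2 - \<iota> (q + inverse q) * F1 * F2 * F1 + F2 * F1 ^ 2 = 0 \<and>
     F2 ^ 2 * F1 - \<iota> (q + inverse q) * F2 * F1 * F2 + F1 * F2 ^ 2 = 0"

definition left_module :: "('a::ring_1 \<Rightarrow> 'v::ab_group_add \<Rightarrow> 'v) \<Rightarrow> bool" where
  "left_module act \<longleftrightarrow>
     (\<forall>a b v. act (a + b) v = act a v + act b v) \<and>
     (\<forall>a v w. act a (v + w) = act a v + act a w) \<and>
     (\<forall>a b v. act (a * b) v = act a (act b v)) \<and>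
     (\<forall>v. act 1 v = v)"

inductive_set kc_alg :: "(complex \<Rightarrow> 'a::ring_1) \<Rightarrow> 'a \<Rightarrow> 'a \<Rightarrow> 'a \<Rightarrow> 'a set"
  for \<iota> K Ki C1 where
  scalar: "\<iota> c \<in> kc_alg \<iota> K Ki C1"
| genK: "K \<in> kc_alg \<iota> K Ki C1"
| genKi: "Ki \<in> kc_alg \<iota> K Ki C1"
| genC1: "C1 \<in> kc_alg \<iota> K Ki C1"
| add: "x \<in> kc_alg \<iota> K Ki C1 \<Longrightarrow> y \<in> kc_alg \<iota> K Ki C1 \<Longrightarrow> x + y \<in> kc_alg \<iota> K Ki C1"
| mult: "x \<in> kc_alg \<iota> K Ki C1 \<Longrightarrow> y \<in> kc_alg \<iota> K Ki C1 \<Longrightarrow> x * y \<in> kc_alg \<iota> K Ki C1"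

definition acoef :: "complex \<Rightarrow> complex \<Rightarrow> nat \<Rightarrow> nat \<Rightarrow> nat \<Rightarrow> complex" where
  "acoef q \<alpha> n k j =
     (-1) ^ j * \<alpha> ^ k * (q ^ 2 - 1) ^ k * q powi (int j * (int n - 3)) *
     q powi ((int k * (2 * int n + 2 * int j + int k - 7)) div 2) *
     qbinom q n k * qbinom q (n - k) j"

text \<open>Note: k(2n+2j+k-7) is always even, so the division by 2 is exact.\<close>

end

theory Submission
  imports Defs
begin


lemma qfact_Suc: "qfact q (Suc n) = qfact q n * qint q (Suc n)"
  unfolding qfact_def by (simp add: atLeastAtMostSuc_conv mult.commute)

lemma qfact_0: "qfact q 0 = 1" unfolding qfact_def by simp

lemma qint_0: "qint q 0 = 0" unfolding qint_def by simp

lemma qint_nz: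
  assumes q0: "q \<noteq> 0" and nr: "\<forall>m::nat. m > 0 \<longrightarrow> q ^ m \<noteq> 1" and i: "i > 0"
  shows "qint q i \<noteq> 0"
proof
  assume "qint q i = 0"
  have d: "q - inverse q \<noteq> 0"
  proof
    assume "q - inverse q = 0"
    then have "q * q = q * inverse q" by simp
    then have "q ^ 2 = 1" using q0 by (simp add: power2_eq_square)
    with nr show False by auto
  qed
  from \<open>qint q i = 0\<close> d have "q ^ i = inverse q ^ i" unfolding qint_def by simp
  then have "q ^ i * q ^ i = inverse q ^ i * q ^ i" by simp
  then have "q ^ (2*i) = 1" using q0 by (simp add: power_mult_distrib[symmetric] mult_2 power_add)
  with nr i show False by auto
qed

lemma qfact_nz:
  assumes q0: "q \<noteq> 0" and nr: "\<forall>m::nat. m > 0 \<longrightarrow> q ^ m \<noteq> 1"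
  shows "qfact q n \<noteq> 0"
  by (induction n) (auto simp: qfact_0 qfact_Suc qint_nz[OF q0 nr])

definition ee :: "nat \<Rightarrow> nat \<Rightarrow> nat \<Rightarrow> int" where
  "ee n k j = int j * (int n - 3) + (int k * (2 * int n + 2 * int j + int k - 7)) div 2"

lemma ee_twice: "2 * ee n k j = 2 * int j * (int n - 3) + int k * (2 * int n + 2 * int j + int k - 7)"
proof -
  have "even (int k * (2 * int n + 2 * int j + int k - 7))"
  proof (cases "even k")
    case True then show ?thesis by simp
  next
    case False
    then have "odd (int k)" by simp
    then have "even (2 * int n + 2 * int j + int k - 7)" by simp
    then show ?thesis by simp
  qed
  then show ?thesis unfolding ee_def by (simp add: algebra_simps)
qed

lemma ee_Suc_n: "ee (Suc n) k j = ee n k j + int j + int k"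
  using ee_twice[of "Suc n" k j] ee_twice[of n k j] by (simp add: algebra_simps)

lemma ee_Suc_j: "ee n k (Suc j) = ee n k j + int n - 3 + int k"
  using ee_twice[of n k "Suc j"] ee_twice[of n k j] by (simp add: algebra_simps)

lemma ee_Suc_k: "ee n (Suc k) j = ee n k j + int n + int j + int k - 3"
  using ee_twice[of n "Suc k" j] ee_twice[of n k j] by (simp add: algebra_simps)

lemma powi_shift:
  fixes q :: complex
  assumes "q \<noteq> 0" "A + int a = B + int b"
  shows "q powi A * q ^ a = q powi B * q ^ b"
proof -
  have "q powi (A + int a) = q powi A * q ^ a" using assms power_int_add[of q A "int a"] by simp
  moreover have "q powi (B + int b) = q powi B * q ^ b" using assms power_int_add[of q B "int b"] by simp
  ultimately show ?thesis using assms by metis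
qed

lemma qint_identity:
  fixes q :: complex
  assumes q0: "q \<noteq> 0" and d: "q - inverse q \<noteq> 0"
  shows "q ^ (j + k) * qint q (k + j + r) = qint q r + q ^ (k + j + r + k) * qint q j + q ^ (r + k) * qint q k"
proof -
  have h: "\<And>m. q ^ m * inverse q ^ m = 1" using q0 by (simp add: power_inverse[symmetric] power_mult_distrib[symmetric])
  have alg: "\<And>a b c ia ib ic :: complex. a*ia=1 \<Longrightarrow> b*ib=1 \<Longrightarrow> c*ic=1 \<Longrightarrow>
     b*a*(a*b*c - ia*ib*ic) = (c - ic) + a*b*c*a*(b - ib) + c*a*(a - ia)" by algebra
  have "q ^ j * q ^ k * (q ^ k * q ^ j * q ^ r - inverse q ^ k * inverse q ^ j * inverse q ^ r) =
        (q ^ r - inverse q ^ r) + q ^ k * q ^ j * q ^ r * q ^ k * (q ^ j - inverse q ^ j) + q ^ r * q ^ k * (q ^ k - inverse q ^ k)"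
    using alg[OF h[of k] h[of j] h[of r]] by (simp add: mult_ac)
  then have "q ^ (j + k) * (q ^ (k + j + r) - inverse q ^ (k + j + r)) =
        (q ^ r - inverse q ^ r) + q ^ (k + j + r + k) * (q ^ j - inverse q ^ j) + q ^ (r + k) * (q ^ k - inverse q ^ k)"
    by (simp only: power_add)
  then have X: "q ^ (j + k) * (q ^ (k + j + r) - inverse q ^ (k + j + r)) / (q - inverse q) =
        ((q ^ r - inverse q ^ r) + q ^ (k + j + r + k) * (q ^ j - inverse q ^ j) + q ^ (r + k) * (q ^ k - inverse q ^ k)) / (q - inverse q)"
    by simp
  show ?thesis using X unfolding qint_def by (simp add: add_divide_distrib times_divide_eq_right)
qed

locale scal_ctx =
  fixes q \<alpha> :: complex
  assumes q0: "q \<noteq> 0" and nr: "\<forall>m::nat. m > 0 \<longrightarrow> q ^ m \<noteq> 1" and a0: "\<alpha> \<noteq> 0"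
begin

definition PP where "PP n k j = (-1) ^ j * (\<alpha> * (q^2 - 1)) ^ k * q powi ee n k j"

lemma dnz: "q - inverse q \<noteq> 0"
proof
  assume "q - inverse q = 0"
  then have "q * q = q * inverse q" by simp
  then have "q ^ 2 = 1" using q0 by (simp add: power2_eq_square)
  with nr show False by auto
qed

lemma qfnz: "qfact q n \<noteq> 0" using qfact_nz[OF q0 nr] .

lemma acoef_zero: "n < k + j \<Longrightarrow> acoef q \<alpha> n k j = 0"
  unfolding acoef_def qbinom_def by auto

lemma acoef_closed:
  assumes "k + j \<le> n"
  shows "acoef q \<alpha> n k j = PP n k j * (qfact q n / (qfact q k * qfact q j * qfact q (n - k - j)))"
proof -
  have e: "q powi (int j * (int n - 3)) * q powi ((int k * (2 * int n + 2 * int j + int k - 7)) div 2) = q powi ee n k j"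
    unfolding ee_def using q0 by (simp add: power_int_add)
  have b: "qbinom q n k * qbinom q (n - k) j = qfact q n / (qfact q k * qfact q j * qfact q (n - k - j))"
  proof -
    have "j \<le> n - k" using assms by simp
    then show ?thesis
    unfolding qbinom_def using assms qfnz[of "n - k"] qfnz[of k] qfnz[of j] qfnz[of "n - k - j"]
    by (simp add: field_simps diff_diff_left)
  qed
  have "acoef q \<alpha> n k j = (-1) ^ j * (\<alpha> ^ k * (q ^ 2 - 1) ^ k) * (q powi (int j * (int n - 3)) * q powi ((int k * (2 * int n + 2 * int j + int k - 7)) div 2)) * (qbinom q n k * qbinom q (n - k) j)"
    unfolding acoef_def by (simp only: mult_ac)
  also have "\<dots> = (-1) ^ j * (\<alpha> ^ k * (q ^ 2 - 1) ^ k) * q powi ee n k j * (qfact q n / (qfact q k * qfact q j * qfact q (n - k - j)))"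
    by (simp only: e b)
  finally show ?thesis unfolding PP_def by (simp add: power_mult_distrib)
qed

lemma acoef_rec:
  "acoef q \<alpha> (Suc n) k j = acoef q \<alpha> n k j
     - (case j of 0 \<Rightarrow> 0 | Suc i \<Rightarrow> acoef q \<alpha> n k i * (inverse q ^ 2 * q ^ (2 * n + 2 * k)))
     + (case k of 0 \<Rightarrow> 0 | Suc i \<Rightarrow> acoef q \<alpha> n i j * (\<alpha> * (1 - inverse q ^ 2) * q ^ (2 * n + i)))"
proof (cases "Suc n < k + j")
  case True
  then show ?thesis by (auto simp: acoef_zero split: nat.split)
next
  case False
  then obtain r where r: "Suc n = k + j + r" by (metis add.commute le_iff_add not_less)
  define W where "W = qfact q n / (qfact q k * qfact q j * qfact q r)"
  have F0: "acoef q \<alpha> (Suc n) k j = PP (Suc n) k j * qint q (Suc n) * W"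
  proof -
    have "Suc n - k - j = r" using r by simp
    then have "acoef q \<alpha> (Suc n) k j = PP (Suc n) k j * (qfact q (Suc n) / (qfact q k * qfact q j * qfact q r))"
      using False acoef_closed[of k j "Suc n"] by simp
    then show ?thesis using qfnz[of k] qfnz[of j] qfnz[of r]
      by (simp only: W_def qfact_Suc) (simp add: field_simps)
  qed
  have F1: "acoef q \<alpha> n k j = PP n k j * qint q r * W"
  proof (cases r)
    case 0 then show ?thesis using r by (simp add: acoef_zero qint_0)
  next
    case (Suc r')
    then have "n - k - j = r'" using r by simp
    then show ?thesis using Suc r qfnz[of k] qfnz[of j] qfnz[of r'] qint_nz[OF q0 nr, of "Suc r'"]
      by (simp add: acoef_closed W_def qfact_Suc field_simps)
  qed
  have PS: "PP (Suc n) k j = PP n k j * q ^ (j + k)"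
  proof -
    have "q powi ee (Suc n) k j * q ^ 0 = q powi ee n k j * q ^ (j + k)"
      by (rule powi_shift[OF q0]) (simp add: ee_Suc_n)
    then show ?thesis unfolding PP_def by simp
  qed
  have F2: "(case j of 0 \<Rightarrow> 0 | Suc i \<Rightarrow> acoef q \<alpha> n k i * (inverse q ^ 2 * q ^ (2 * n + 2 * k)))
        = - (q ^ (k + j + r + k) * PP n k j * qint q j * W)"
  proof (cases j)
    case 0 then show ?thesis by (simp add: qint_0)
  next
    case (Suc i)
    have ni: "n - k - i = r" using r Suc by simp
    have ac: "acoef q \<alpha> n k i = PP n k i * qint q j * W"
      using Suc r ni qfnz[of k] qfnz[of i] qfnz[of r] qint_nz[OF q0 nr, of "Suc i"]
      by (simp add: acoef_closed W_def qfact_Suc field_simps)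
    have sh: "q powi ee n k i * q ^ (2 * n + 2 * k) = q powi ee n k j * q ^ (Suc n + k + 2)"
      by (rule powi_shift[OF q0]) (simp add: Suc ee_Suc_j)
    have "PP n k i * (inverse q ^ 2 * q ^ (2 * n + 2 * k)) = - (q ^ (Suc n + k) * PP n k j)"
    proof -
      have "PP n k i * (inverse q ^ 2 * q ^ (2 * n + 2 * k)) = (-1) ^ i * (\<alpha> * (q^2 - 1)) ^ k * inverse q ^ 2 * (q powi ee n k i * q ^ (2 * n + 2 * k))"
        unfolding PP_def by (simp add: mult_ac)
      also have "\<dots> = (-1) ^ i * (\<alpha> * (q^2 - 1)) ^ k * inverse q ^ 2 * (q powi ee n k j * q ^ (Suc n + k + 2))"
        by (simp only: sh)
      also have "\<dots> = - (q ^ (Suc n + k) * PP n k j)"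
        unfolding PP_def Suc using q0 by (simp add: power_add field_simps power2_eq_square)
      finally show ?thesis .
    qed
    then have pe: "PP n k i * (inverse q ^ 2 * q ^ (2 * n + 2 * k)) = - (q ^ (Suc n + k) * PP n k j)" .
    have "acoef q \<alpha> n k i * (inverse q ^ 2 * q ^ (2 * n + 2 * k)) = qint q j * W * (PP n k i * (inverse q ^ 2 * q ^ (2 * n + 2 * k)))"
      using ac by (simp add: mult_ac)
    also have "\<dots> = qint q j * W * (- (q ^ (Suc n + k) * PP n k j))" by (simp only: pe)
    also have "\<dots> = - (q ^ (k + j + r + k) * PP n k j * qint q j * W)" using r by (simp add: mult_ac)
    finally show ?thesis using Suc by simp
  qed
  have F3: "(case k of 0 \<Rightarrow> 0 | Suc i \<Rightarrow> acoef q \<alpha> n i j * (\<alpha> * (1 - inverse q ^ 2) * q ^ (2 * n + i)))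
        = q ^ (r + k) * PP n k j * qint q k * W"
  proof (cases k)
    case 0 then show ?thesis by (simp add: qint_0)
  next
    case (Suc i)
    have ni: "n - i - j = r" using r Suc by simp
    have ac: "acoef q \<alpha> n i j = PP n i j * qint q k * W"
      using Suc r ni qfnz[of j] qfnz[of i] qfnz[of r] qint_nz[OF q0 nr, of "Suc i"]
      by (simp add: acoef_closed W_def qfact_Suc field_simps)
    have sh: "q powi ee n i j * q ^ (2 * n + i) = q powi ee n k j * q ^ (r + k + 2)"
      by (rule powi_shift[OF q0]) (use r Suc in \<open>simp add: ee_Suc_k\<close>)
    have "PP n i j * (\<alpha> * (1 - inverse q ^ 2) * q ^ (2 * n + i)) = q ^ (r + k) * PP n k j"
    proof -
      have "PP n i j * (\<alpha> * (1 - inverse q ^ 2) * q ^ (2 * n + i)) = (-1) ^ j * (\<alpha> * (q^2 - 1)) ^ i * (\<alpha> * (1 - inverse q ^ 2)) * (q powi ee n i j * q ^ (2 * n + i))"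
        unfolding PP_def by (simp add: mult_ac)
      also have "\<dots> = (-1) ^ j * (\<alpha> * (q^2 - 1)) ^ i * (\<alpha> * (1 - inverse q ^ 2)) * (q powi ee n k j * q ^ (r + k + 2))"
        by (simp only: sh)
      also have "\<dots> = q ^ (r + k) * PP n k j"
        unfolding PP_def Suc using q0 by (simp add: power_add field_simps numeral_eq_Suc)
      finally show ?thesis .
    qed
    then have pe: "PP n i j * (\<alpha> * (1 - inverse q ^ 2) * q ^ (2 * n + i)) = q ^ (r + k) * PP n k j" .
    have "acoef q \<alpha> n i j * (\<alpha> * (1 - inverse q ^ 2) * q ^ (2 * n + i)) = qint q k * W * (PP n i j * (\<alpha> * (1 - inverse q ^ 2) * q ^ (2 * n + i)))"
      using ac by (simp add: mult_ac)
    also have "\<dots> = qint q k * W * (q ^ (r + k) * PP n k j)" by (simp only: pe)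
    also have "\<dots> = q ^ (r + k) * PP n k j * qint q k * W" by (simp add: mult_ac)
    finally show ?thesis using Suc by simp
  qed
  have QI: "q ^ (j + k) * qint q (k + j + r) = qint q r + q ^ (k + j + r + k) * qint q j + q ^ (r + k) * qint q k"
    by (rule qint_identity[OF q0 dnz])
  have "PP (Suc n) k j * qint q (Suc n) * W = PP n k j * W * (q ^ (j + k) * qint q (k + j + r))"
    using PS r by (simp add: mult_ac)
  also have "\<dots> = PP n k j * W * (qint q r + q ^ (k + j + r + k) * qint q j + q ^ (r + k) * qint q k)"
    by (simp only: QI)
  finally show ?thesis unfolding F0 F1 F2 F3 by (simp add: algebra_simps)
qed

end




locale iota_ctx =
  fixes \<iota> :: "complex \<Rightarrow> 'a::ring_1"
  assumes scal: "scalar_embedding \<iota>"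
begin

lemma iadd: "\<iota> (a + b) = \<iota> a + \<iota> b" using scal unfolding scalar_embedding_def by blast
lemma imult: "\<iota> (a * b) = \<iota> a * \<iota> b" using scal unfolding scalar_embedding_def by blast
lemma ione: "\<iota> 1 = 1" using scal unfolding scalar_embedding_def by blast
lemma icomm: "\<iota> c * x = x * \<iota> c" using scal unfolding scalar_embedding_def by blast
lemma izero: "\<iota> 0 = 0" using iadd[of 0 0] by simp
lemma ineg: "\<iota> (- a) = - \<iota> a"
proof -
  have "\<iota> a + \<iota> (- a) = 0" using iadd[of a "-a"] izero by simp
  from minus_unique[OF this] show ?thesis by simp
qed
lemma idiff: "\<iota> (a - b) = \<iota> a - \<iota> b" using iadd[of a "-b"] ineg[of b] by simp
lemma ipow: "\<iota> (a ^ n) = \<iota> a ^ n" by (induction n) (simp_all add: ione imult)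
lemma icomm2: "x * (\<iota> c * y) = \<iota> c * (x * y)"
  by (metis icomm mult.assoc)
lemma imult2: "\<iota> a * (\<iota> b * y) = \<iota> (a * b) * y"
  by (simp add: imult mult.assoc)

definition qc :: "'a \<Rightarrow> 'a \<Rightarrow> complex \<Rightarrow> bool" where
  "qc x y c \<longleftrightarrow> x * y = \<iota> c * (y * x)"

lemma qc_mult_right: "qc x y c \<Longrightarrow> qc x z d \<Longrightarrow> qc x (y * z) (c * d)"
  unfolding qc_def
  by (metis icomm2 imult2 mult.assoc)

lemma qc_mult_left: "qc x z c \<Longrightarrow> qc y z d \<Longrightarrow> qc (x * y) z (c * d)"
  unfolding qc_def
proof -
  assume a: "x * z = \<iota> c * (z * x)" and b: "y * z = \<iota> d * (z * y)"
  have "x * y * z = x * (\<iota> d * (z * y))" by (simp add: mult.assoc b)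
  also have "\<dots> = \<iota> d * ((x * z) * y)" by (metis icomm2 mult.assoc)
  also have "\<dots> = \<iota> d * (\<iota> c * (z * x) * y)" by (simp only: a)
  also have "\<dots> = \<iota> (d * c) * (z * (x * y))" by (simp only: imult2 mult.assoc)
  also have "\<dots> = \<iota> (c * d) * (z * (x * y))" by (simp only: mult.commute)
  finally show "x * y * z = \<iota> (c * d) * (z * (x * y))" .
qed

lemma qc_pow_right: "qc x y c \<Longrightarrow> qc x (y ^ n) (c ^ n)"
proof (induction n)
  case 0 then show ?case by (simp add: qc_def ione)
next
  case (Suc n)
  have "qc x (y * y ^ n) (c * c ^ n)" by (rule qc_mult_right[OF Suc.prems Suc.IH[OF Suc.prems]])
  then show ?case by simp
qed

lemma qc_pow_left: "qc x y c \<Longrightarrow> qc (x ^ n) y (c ^ n)"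
proof (induction n)
  case 0 then show ?case by (simp add: qc_def ione)
next
  case (Suc n)
  have "qc (x * x ^ n) y (c * c ^ n)" by (rule qc_mult_left[OF Suc.prems Suc.IH[OF Suc.prems]])
  then show ?case by simp
qed

lemma qc_cong: "qc x y c \<Longrightarrow> c = d \<Longrightarrow> qc x y d" by simp

lemma qc_diff_right: "qc x y c \<Longrightarrow> qc x z c \<Longrightarrow> qc x (y - z) c"
  unfolding qc_def by (simp add: algebra_simps)

lemma qc_scal_right: "qc x y c \<Longrightarrow> qc x (\<iota> d * y) c"
  unfolding qc_def by (metis icomm2 mult.assoc)

lemma qc_conj:
  assumes "x * xi = 1" "xi * x = 1" "x * y * xi = \<iota> d * y" "d \<noteq> 0"
  shows "qc x y d" "qc xi y (inverse d)"
proof -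
  have "x * y = x * y * (xi * x)" using assms by simp
  also have "\<dots> = (x * y * xi) * x" by (simp only: mult.assoc)
  also have "\<dots> = \<iota> d * y * x" by (simp only: assms(3))
  finally show "qc x y d" unfolding qc_def by (simp only: mult.assoc)
  have "xi * (x * y * xi) * x = (xi * x) * y * (xi * x)" by (simp only: mult.assoc)
  also have "\<dots> = y" using assms(2) by simp
  finally have "xi * (\<iota> d * y) * x = y" using assms(3) by simp
  then have "\<iota> d * (xi * y * x) = y" by (metis icomm2 mult.assoc)
  then have "\<iota> (inverse d) * (\<iota> d * (xi * y * x)) = \<iota> (inverse d) * y" by simp
  then have e: "xi * y * x = \<iota> (inverse d) * y" using assms by (simp add: imult2 ione)
  have "xi * y = xi * y * (x * xi)" using assms by simp
  also have "\<dots> = (xi * y * x) * xi" by (simp only: mult.assoc)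
  also have "\<dots> = \<iota> (inverse d) * y * xi" by (simp only: e)
  finally show "qc xi y (inverse d)" unfolding qc_def by (simp only: mult.assoc)
qed

lemma qc_comm: "x * y = y * x \<Longrightarrow> qc x y 1" unfolding qc_def by (simp add: ione)

end




locale alg_ctx = scal_ctx q \<alpha> + iota_ctx \<iota>
  for q \<alpha> :: complex and \<iota> :: "complex \<Rightarrow> 'a::ring_1" +
  fixes E1 E2 F1 F2 K1 K1i K2 K2i F3 Ki :: 'a
  assumes rels: "jimbo_sl3 q \<iota> E1 E2 F1 F2 K1 K1i K2 K2i"
    and F3_def: "F3 = F1 * F2 - \<iota> q * F2 * F1"
    and Ki_def: "Ki = K1i * K2i ^ 2"
begin

lemma R: "K1 * K1i = 1" "K1i * K1 = 1" "K2 * K2i = 1" "K2i * K2 = 1" "K1 * K2 = K2 * K1"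
  "K1 * F1 * K1i = \<iota> (inverse q ^ 2) * F1" "K1 * F2 * K1i = \<iota> q * F2"
  "K2 * F1 * K2i = \<iota> q * F1" "K2 * F2 * K2i = \<iota> (inverse q ^ 2) * F2"
  "F2 ^ 2 * F1 - \<iota> (q + inverse q) * F2 * F1 * F2 + F1 * F2 ^ 2 = 0"
  using rels unfolding jimbo_sl3_def by auto

lemma qK2F2: "qc K2 F2 (inverse q ^ 2)" using qc_conj(1)[OF R(3,4,9)] q0 by simp
lemma qK2F1: "qc K2 F1 q" using qc_conj(1)[OF R(3,4,8)] q0 by simp
lemma qK1iF2: "qc K1i F2 (inverse q)" using qc_conj(2)[OF R(1,2,7)] q0 by simp
lemma qK1iF1: "qc K1i F1 (q ^ 2)" using qc_conj(2)[OF R(1,2,6)] q0 by (simp add: power_inverse)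
lemma qK2iF2: "qc K2i F2 (q ^ 2)" using qc_conj(2)[OF R(3,4,9)] q0 by (simp add: power_inverse)
lemma qK2iF1: "qc K2i F1 (inverse q)" using qc_conj(2)[OF R(3,4,8)] q0 by simp

lemma F3_alt: "F3 = F1 * F2 - \<iota> q * (F2 * F1)" using F3_def by (simp add: mult.assoc)

lemma qKiF2: "qc Ki F2 (q ^ 3)"
  unfolding Ki_def
  by (rule qc_cong[OF qc_mult_left[OF qK1iF2 qc_pow_left[OF qK2iF2]]]) (use q0 in \<open>simp add: field_simps eval_nat_numeral\<close>)

lemma qKiF1: "qc Ki F1 1"
  unfolding Ki_def
  by (rule qc_cong[OF qc_mult_left[OF qK1iF1 qc_pow_left[OF qK2iF1]]]) (use q0 in \<open>simp add: field_simps eval_nat_numeral\<close>)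

lemma qc_F3: "qc x F1 a \<Longrightarrow> qc x F2 b \<Longrightarrow> qc x F3 (a * b)"
proof -
  assume a: "qc x F1 a" and b: "qc x F2 b"
  have 1: "qc x (F1 * F2) (a * b)" by (rule qc_mult_right[OF a b])
  have "qc x (F2 * F1) (b * a)" by (rule qc_mult_right[OF b a])
  then have 2: "qc x (F2 * F1) (a * b)" by (simp add: mult.commute)
  show ?thesis unfolding F3_alt by (rule qc_diff_right[OF 1 qc_scal_right[OF 2]])
qed

lemma qKiF3: "qc Ki F3 (q ^ 3)" using qc_F3[OF qKiF1 qKiF2] by simp
lemma qK2F3: "qc K2 F3 (inverse q)"
  by (rule qc_cong[OF qc_F3[OF qK2F1 qK2F2]]) (use q0 in \<open>simp add: field_simps power2_eq_square\<close>)

lemma K2_K1i: "K2 * K1i = K1i * K2"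
proof -
  have "K1i * K2 = K1i * K2 * (K1 * K1i)" using R(1) by simp
  also have "\<dots> = K1i * (K2 * K1) * K1i" by (simp only: mult.assoc)
  also have "\<dots> = K1i * (K1 * K2) * K1i" using R(5) by simp
  also have "\<dots> = (K1i * K1) * K2 * K1i" by (simp only: mult.assoc)
  also have "\<dots> = K2 * K1i" using R(2) by simp
  finally show ?thesis by simp
qed

lemma K2_K2i: "K2 * K2i = K2i * K2" using R(3,4) by simp

lemma qK2Ki: "qc K2 Ki 1"
  unfolding Ki_def
  using qc_mult_right[OF qc_comm[OF K2_K1i] qc_pow_right[OF qc_comm[OF K2_K2i], of 2]] by simp

lemma K2Ki_comm: "K2 ^ a * Ki ^ b = Ki ^ b * K2 ^ a"
  using qc_pow_right[OF qc_pow_left[OF qK2Ki, of a], of b] unfolding qc_def by (simp add: ione)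

lemma qF3F2: "qc F3 F2 (inverse q)"
proof -
  have s: "F1 * F2 ^ 2 = \<iota> q * (F2 * F1 * F2) + \<iota> (inverse q) * (F2 * F1 * F2) - F2 ^ 2 * F1"
  proof -
    have "F1 * F2 ^ 2 = (F2 ^ 2 * F1 - \<iota> (q + inverse q) * F2 * F1 * F2 + F1 * F2 ^ 2)
            + \<iota> (q + inverse q) * F2 * F1 * F2 - F2 ^ 2 * F1" by (simp add: algebra_simps)
    also have "\<dots> = \<iota> (q + inverse q) * F2 * F1 * F2 - F2 ^ 2 * F1" using R(10) by simp
    finally show ?thesis by (simp add: iadd algebra_simps)
  qed
  have "F3 * F2 = F1 * F2 ^ 2 - \<iota> q * (F2 * F1 * F2)"
    unfolding F3_alt by (simp add: algebra_simps power2_eq_square)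
  also have "\<dots> = \<iota> (inverse q) * (F2 * F1 * F2) - F2 ^ 2 * F1" using s by simp
  also have "\<dots> = \<iota> (inverse q) * (F2 * F3)"
  proof -
    have "\<iota> (inverse q) * (F2 * F3) = \<iota> (inverse q) * (F2 * F1 * F2) - \<iota> (inverse q) * (\<iota> q * (F2 * F2 * F1))"
    proof -
      have "F2 * (\<iota> q * (F2 * F1)) = \<iota> q * (F2 * F2 * F1)" by (metis icomm2 mult.assoc)
      then show ?thesis unfolding F3_alt by (simp add: right_diff_distrib mult.assoc)
    qed
    also have "\<iota> (inverse q) * (\<iota> q * (F2 * F2 * F1)) = F2 ^ 2 * F1"
      using q0 by (simp add: imult2 ione power2_eq_square)
    finally show ?thesis by simp
  qed
  finally show ?thesis unfolding qc_def .
qed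

end




context alg_ctx begin

definition M where "M n k j = F2 ^ (n - k) * F3 ^ k * K2 ^ (2 * j) * Ki ^ (2 * j + k)"

lemma M_split: "M n k j = (F2 ^ (n - k) * F3 ^ k) * (K2 ^ (2 * j) * Ki ^ (2 * j + k))"
  unfolding M_def by (simp only: mult.assoc)

lemma qc_mono: "qc x F2 a \<Longrightarrow> qc x F3 b \<Longrightarrow> qc x (F2 ^ m * F3 ^ k) (a ^ m * b ^ k)"
  by (rule qc_mult_right[OF qc_pow_right qc_pow_right])

lemma qTF2: "qc (K2 ^ 2 * Ki ^ 2) F2 (q ^ 2)"
  by (rule qc_cong[OF qc_mult_left[OF qc_pow_left[OF qK2F2] qc_pow_left[OF qKiF2]]])
     (use q0 in \<open>simp add: field_simps eval_nat_numeral\<close>)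

lemma qTF3: "qc (K2 ^ 2 * Ki ^ 2) F3 (q ^ 4)"
  by (rule qc_cong[OF qc_mult_left[OF qc_pow_left[OF qK2F3] qc_pow_left[OF qKiF3]]])
     (use q0 in \<open>simp add: field_simps eval_nat_numeral\<close>)

lemma L1: "k \<le> n \<Longrightarrow> F2 * M n k j = M (Suc n) k j"
  unfolding M_def by (simp add: Suc_diff_le mult.assoc)

lemma L2:
  assumes "k \<le> n"
  shows "F2 * (\<iota> (inverse q ^ 2) * K2 ^ 2 * Ki ^ 2) * M n k j
         = \<iota> (inverse q ^ 2 * q ^ (2 * n + 2 * k)) * M (Suc n) k (Suc j)"
proof -
  define P where "P = F2 ^ (n - k) * F3 ^ k"
  define Rr where "Rr = K2 ^ (2 * j) * Ki ^ (2 * j + k)"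
  define T where "T = K2 ^ 2 * Ki ^ 2"
  have sc: "(q ^ 2) ^ (n - k) * (q ^ 4) ^ k = q ^ (2 * n + 2 * k)"
  proof -
    have "(q ^ 2) ^ (n - k) * (q ^ 4) ^ k = q ^ (2 * (n - k) + 4 * k)"
      by (simp add: power_mult power_add)
    also have "2 * (n - k) + 4 * k = 2 * n + 2 * k" using assms by simp
    finally show ?thesis .
  qed
  have TP: "T * P = \<iota> (q ^ (2 * n + 2 * k)) * (P * T)"
    using qc_mono[OF qTF2 qTF3, of "n - k" k] sc unfolding qc_def T_def P_def by simp
  have TR: "T * Rr = K2 ^ (2 * Suc j) * Ki ^ (2 * Suc j + k)"
  proof -
    have "T * Rr = K2 ^ 2 * (Ki ^ 2 * K2 ^ (2 * j)) * Ki ^ (2 * j + k)"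
      unfolding T_def Rr_def by (simp only: mult.assoc)
    also have "\<dots> = K2 ^ 2 * (K2 ^ (2 * j) * Ki ^ 2) * Ki ^ (2 * j + k)"
      by (simp only: K2Ki_comm)
    also have "\<dots> = (K2 ^ 2 * K2 ^ (2 * j)) * (Ki ^ 2 * Ki ^ (2 * j + k))"
      by (simp only: mult.assoc)
    also have "\<dots> = K2 ^ (2 * Suc j) * Ki ^ (2 * Suc j + k)"
      by (simp only: power_add[symmetric]) simp
    finally show ?thesis .
  qed
  have FP: "F2 * P = F2 ^ (Suc n - k) * F3 ^ k"
    unfolding P_def using assms by (simp add: Suc_diff_le mult.assoc)
  have "F2 * (\<iota> (inverse q ^ 2) * K2 ^ 2 * Ki ^ 2) * M n k j = F2 * (\<iota> (inverse q ^ 2) * (T * P * Rr))"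
    unfolding M_split T_def P_def Rr_def by (simp only: mult.assoc)
  also have "\<dots> = \<iota> (inverse q ^ 2) * (F2 * (T * P) * Rr)"
    by (simp only: icomm2 mult.assoc)
  also have "\<dots> = \<iota> (inverse q ^ 2) * (F2 * (\<iota> (q ^ (2 * n + 2 * k)) * (P * T)) * Rr)"
    by (simp only: TP)
  also have "\<dots> = \<iota> (inverse q ^ 2) * (\<iota> (q ^ (2 * n + 2 * k)) * ((F2 * P) * (T * Rr)))"
  proof -
    have "F2 * (\<iota> (q ^ (2 * n + 2 * k)) * (P * T)) * Rr = \<iota> (q ^ (2 * n + 2 * k)) * ((F2 * P) * (T * Rr))"
      by (simp only: icomm2 mult.assoc)
    then show ?thesis by simp
  qed
  also have "\<dots> = \<iota> (inverse q ^ 2 * q ^ (2 * n + 2 * k)) * ((F2 * P) * (T * Rr))"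
    by (simp only: imult2)
  also have "\<dots> = \<iota> (inverse q ^ 2 * q ^ (2 * n + 2 * k)) * M (Suc n) k (Suc j)"
    unfolding FP TR M_split by simp
  finally show ?thesis .
qed

lemma L3:
  assumes "k \<le> n"
  shows "\<iota> c * F3 * Ki * M n k j = \<iota> (c * q ^ (2 * n + k)) * M (Suc n) (Suc k) j"
proof -
  define P where "P = F2 ^ (n - k) * F3 ^ k"
  define Rr where "Rr = K2 ^ (2 * j) * Ki ^ (2 * j + k)"
  have s3: "(q ^ 3) ^ (n - k) * (q ^ 3) ^ k = q ^ (3 * n)"
  proof -
    have "(q ^ 3) ^ (n - k) * (q ^ 3) ^ k = q ^ (3 * (n - k) + 3 * k)"
      by (simp add: power_mult power_add)
    also have "3 * (n - k) + 3 * k = 3 * n" using assms by simp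
    finally show ?thesis .
  qed
  have sc: "q ^ (3 * n) * inverse q ^ (n - k) = q ^ (2 * n + k)"
  proof -
    have "q ^ (3 * n) = q ^ (2 * n + k) * q ^ (n - k)"
      using assms by (simp add: power_add[symmetric])
    then show ?thesis using q0 by (simp add: field_simps)
  qed
  have KP: "Ki * P = \<iota> (q ^ (3 * n)) * (P * Ki)"
    using qc_mono[OF qKiF2 qKiF3, of "n - k" k] s3 unfolding qc_def P_def by simp
  have F3P: "F3 * P = \<iota> (inverse q ^ (n - k)) * (F2 ^ (Suc n - Suc k) * F3 ^ Suc k)"
  proof -
    have "F3 * F2 ^ (n - k) = \<iota> (inverse q ^ (n - k)) * (F2 ^ (n - k) * F3)"
      using qc_pow_right[OF qF3F2, of "n - k"] unfolding qc_def by simp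
    then have "F3 * P = \<iota> (inverse q ^ (n - k)) * (F2 ^ (n - k) * F3) * F3 ^ k"
      unfolding P_def by (simp only: mult.assoc[symmetric])
    then show ?thesis by (simp add: mult.assoc)
  qed
  have KR: "Ki * Rr = K2 ^ (2 * j) * Ki ^ (2 * j + Suc k)"
    unfolding Rr_def using K2Ki_comm[of "2 * j" 1]
    by (simp add: mult.assoc[symmetric])
  have "\<iota> c * F3 * Ki * M n k j = \<iota> c * (F3 * ((Ki * P) * Rr))"
    unfolding M_split P_def Rr_def by (simp only: mult.assoc)
  also have "\<dots> = \<iota> c * (F3 * (\<iota> (q ^ (3 * n)) * (P * Ki) * Rr))" by (simp only: KP)
  also have "\<dots> = \<iota> c * (\<iota> (q ^ (3 * n)) * ((F3 * P) * (Ki * Rr)))"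
  proof -
    have "F3 * (\<iota> (q ^ (3 * n)) * (P * Ki) * Rr) = \<iota> (q ^ (3 * n)) * ((F3 * P) * (Ki * Rr))"
      by (simp only: icomm2 mult.assoc)
    then show ?thesis by simp
  qed
  also have "\<dots> = \<iota> c * (\<iota> (q ^ (3 * n)) * (\<iota> (inverse q ^ (n - k)) * (F2 ^ (Suc n - Suc k) * F3 ^ Suc k) * (K2 ^ (2 * j) * Ki ^ (2 * j + Suc k))))"
    by (simp only: F3P KR)
  also have "\<dots> = \<iota> (c * (q ^ (3 * n) * inverse q ^ (n - k))) * M (Suc n) (Suc k) j"
  proof -
    have "\<iota> (inverse q ^ (n - k)) * (F2 ^ (Suc n - Suc k) * F3 ^ Suc k) * (K2 ^ (2 * j) * Ki ^ (2 * j + Suc k))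
      = \<iota> (inverse q ^ (n - k)) * M (Suc n) (Suc k) j" unfolding M_split by (simp only: mult.assoc)
    then show ?thesis by (simp only: imult2 mult.assoc)
  qed
  finally show ?thesis by (simp only: sc)
qed

end




lemma sum_shift:
  fixes G :: "nat \<Rightarrow> nat \<Rightarrow> 'b::comm_monoid_add"
  assumes "G (Suc m) (Suc (Suc m)) = 0"
  shows "(\<Sum>j\<in>{0..Suc m}. G j (Suc j)) = (\<Sum>j\<in>{0..Suc m}. case j of 0 \<Rightarrow> 0 | Suc i \<Rightarrow> G i j)"
proof -
  have "(\<Sum>j\<in>{0..Suc m}. case j of 0 \<Rightarrow> 0 | Suc i \<Rightarrow> G i j) = (\<Sum>j\<in>{0..m}. G j (Suc j))"
    unfolding sum.atLeast0_atMost_Suc_shift by (simp add: comp_def)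
  moreover have "(\<Sum>j\<in>{0..Suc m}. G j (Suc j)) = (\<Sum>j\<in>{0..m}. G j (Suc j))"
    using assms by (simp add: sum.atLeast0_atMost_Suc)
  ultimately show ?thesis by simp
qed

context alg_ctx begin

definition gg where
  "gg = F2 * (1 - \<iota> (inverse q ^ 2) * K2 ^ 2 * Ki ^ 2) + \<iota> (\<alpha> * (1 - inverse q ^ 2)) * F3 * Ki"

definition cc where "cc = \<alpha> * (1 - inverse q ^ 2)"

lemma gM:
  assumes "k \<le> n \<or> a = 0"
  shows "gg * (\<iota> a * M n k j) = \<iota> a * M (Suc n) k j
     - \<iota> (a * (inverse q ^ 2 * q ^ (2 * n + 2 * k))) * M (Suc n) k (Suc j)
     + \<iota> (a * (cc * q ^ (2 * n + k))) * M (Suc n) (Suc k) j"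
proof (cases "k \<le> n")
  case True
  have e: "gg * M n k j = F2 * M n k j - F2 * (\<iota> (inverse q ^ 2) * K2 ^ 2 * Ki ^ 2) * M n k j
      + \<iota> cc * F3 * Ki * M n k j"
    unfolding gg_def cc_def by (simp add: algebra_simps)
  also have "\<dots> = M (Suc n) k j - \<iota> (inverse q ^ 2 * q ^ (2 * n + 2 * k)) * M (Suc n) k (Suc j)
      + \<iota> (cc * q ^ (2 * n + k)) * M (Suc n) (Suc k) j"
    by (simp only: L1[OF True] L2[OF True] L3[OF True])
  finally have e2: "gg * M n k j = \<dots>" .
  have "gg * (\<iota> a * M n k j) = \<iota> a * (gg * M n k j)" by (simp only: icomm2 mult.assoc)
  also have "\<dots> = \<iota> a * M (Suc n) k j - \<iota> a * (\<iota> (inverse q ^ 2 * q ^ (2 * n + 2 * k)) * M (Suc n) k (Suc j))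
      + \<iota> a * (\<iota> (cc * q ^ (2 * n + k)) * M (Suc n) (Suc k) j)"
    by (simp only: e2 distrib_left right_diff_distrib)
  finally show ?thesis by (simp only: imult2)
next
  case False
  then have "a = 0" using assms by simp
  then show ?thesis by (simp add: izero)
qed

definition TS where
  "TS n = (\<Sum>k\<in>{0..n}. \<Sum>j\<in>{0..n - k}.
             \<iota> (acoef q \<alpha> n k j) * F2 ^ (n - k) * F3 ^ k * K2 ^ (2 * j) * Ki ^ (2 * j + k))"

definition SQ where
  "SQ n N = (\<Sum>k\<in>{0..N}. \<Sum>j\<in>{0..N}. \<iota> (acoef q \<alpha> n k j) * M n k j)"

lemma tri_sq:
  assumes "n \<le> N"
  shows "TS n = SQ n N"
proof -
  have "TS n = (\<Sum>k\<in>{0..n}. \<Sum>j\<in>{0..n - k}. \<iota> (acoef q \<alpha> n k j) * M n k j)"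
    unfolding TS_def M_def by (simp only: mult.assoc)
  also have "\<dots> = (\<Sum>k\<in>{0..n}. \<Sum>j\<in>{0..N}. \<iota> (acoef q \<alpha> n k j) * M n k j)"
  proof (rule sum.cong[OF refl])
    fix k assume "k \<in> {0..n}"
    show "(\<Sum>j\<in>{0..n - k}. \<iota> (acoef q \<alpha> n k j) * M n k j) = (\<Sum>j\<in>{0..N}. \<iota> (acoef q \<alpha> n k j) * M n k j)"
      by (rule sum.mono_neutral_left) (use assms in \<open>auto simp: acoef_zero izero\<close>)
  qed
  also have "\<dots> = SQ n N"
    unfolding SQ_def
    by (rule sum.mono_neutral_left) (use assms in \<open>auto simp: acoef_zero izero\<close>)
  finally show ?thesis .
qed

lemma gg_pow: "gg ^ n = TS n"
proof (induction n)
  case 0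
  show ?case unfolding TS_def acoef_def by (simp add: qbinom_def qfact_def ione)
next
  case (Suc n)
  define d1 where "d1 k = inverse q ^ 2 * q ^ (2 * n + 2 * k)" for k
  define d2 where "d2 k = cc * q ^ (2 * n + k)" for k
  let ?a = "acoef q \<alpha> n"
  let ?M = "M (Suc n)"
  have "gg ^ Suc n = gg * SQ n (Suc n)" using Suc tri_sq[of n "Suc n"] by simp
  also have "\<dots> = (\<Sum>k\<in>{0..Suc n}. \<Sum>j\<in>{0..Suc n}. gg * (\<iota> (?a k j) * M n k j))"
    unfolding SQ_def by (simp only: sum_distrib_left)
  also have "\<dots> = (\<Sum>k\<in>{0..Suc n}. \<Sum>j\<in>{0..Suc n}. \<iota> (?a k j) * ?M k j
        - \<iota> (?a k j * d1 k) * ?M k (Suc j) + \<iota> (?a k j * d2 k) * ?M (Suc k) j)"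
  proof (intro sum.cong refl)
    fix k j
    have "k \<le> n \<or> ?a k j = 0" using acoef_zero[of n k j] by linarith
    then show "gg * (\<iota> (?a k j) * M n k j) = \<iota> (?a k j) * ?M k j
        - \<iota> (?a k j * d1 k) * ?M k (Suc j) + \<iota> (?a k j * d2 k) * ?M (Suc k) j"
      unfolding d1_def d2_def by (rule gM)
  qed
  also have "\<dots> = (\<Sum>k\<in>{0..Suc n}. \<Sum>j\<in>{0..Suc n}. \<iota> (?a k j) * ?M k j)
        - (\<Sum>k\<in>{0..Suc n}. \<Sum>j\<in>{0..Suc n}. \<iota> (?a k j * d1 k) * ?M k (Suc j))
        + (\<Sum>k\<in>{0..Suc n}. \<Sum>j\<in>{0..Suc n}. \<iota> (?a k j * d2 k) * ?M (Suc k) j)"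
    by (simp only: sum.distrib sum_subtractf)
  also have "(\<Sum>k\<in>{0..Suc n}. \<Sum>j\<in>{0..Suc n}. \<iota> (?a k j * d1 k) * ?M k (Suc j))
      = (\<Sum>k\<in>{0..Suc n}. \<Sum>j\<in>{0..Suc n}. \<iota> (case j of 0 \<Rightarrow> 0 | Suc i \<Rightarrow> ?a k i * d1 k) * ?M k j)"
  proof (rule sum.cong[OF refl])
    fix k
    have "(\<Sum>j\<in>{0..Suc n}. \<iota> (?a k j * d1 k) * ?M k (Suc j))
        = (\<Sum>j\<in>{0..Suc n}. case j of 0 \<Rightarrow> 0 | Suc i \<Rightarrow> \<iota> (?a k i * d1 k) * ?M k j)"
      by (rule sum_shift[where G = "\<lambda>i j. \<iota> (?a k i * d1 k) * ?M k j"]) (simp add: acoef_zero izero)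
    also have "\<dots> = (\<Sum>j\<in>{0..Suc n}. \<iota> (case j of 0 \<Rightarrow> 0 | Suc i \<Rightarrow> ?a k i * d1 k) * ?M k j)"
      by (intro sum.cong refl) (simp add: izero split: nat.split)
    finally show "(\<Sum>j\<in>{0..Suc n}. \<iota> (?a k j * d1 k) * ?M k (Suc j))
        = (\<Sum>j\<in>{0..Suc n}. \<iota> (case j of 0 \<Rightarrow> 0 | Suc i \<Rightarrow> ?a k i * d1 k) * ?M k j)" .
  qed
  also have "(\<Sum>k\<in>{0..Suc n}. \<Sum>j\<in>{0..Suc n}. \<iota> (?a k j * d2 k) * ?M (Suc k) j)
      = (\<Sum>k\<in>{0..Suc n}. \<Sum>j\<in>{0..Suc n}. \<iota> (case k of 0 \<Rightarrow> 0 | Suc i \<Rightarrow> ?a i j * d2 i) * ?M k j)"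
  proof -
    have "(\<Sum>k\<in>{0..Suc n}. \<Sum>j\<in>{0..Suc n}. \<iota> (?a k j * d2 k) * ?M (Suc k) j)
        = (\<Sum>k\<in>{0..Suc n}. case k of 0 \<Rightarrow> 0 | Suc i \<Rightarrow> (\<Sum>j\<in>{0..Suc n}. \<iota> (?a i j * d2 i) * ?M k j))"
      by (rule sum_shift[where G = "\<lambda>i k. \<Sum>j\<in>{0..Suc n}. \<iota> (?a i j * d2 i) * ?M k j"]) (simp add: acoef_zero izero)
    also have "\<dots> = (\<Sum>k\<in>{0..Suc n}. \<Sum>j\<in>{0..Suc n}. \<iota> (case k of 0 \<Rightarrow> 0 | Suc i \<Rightarrow> ?a i j * d2 i) * ?M k j)"
      by (intro sum.cong refl) (simp add: izero split: nat.split)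
    finally show ?thesis .
  qed
  also have "(\<Sum>k\<in>{0..Suc n}. \<Sum>j\<in>{0..Suc n}. \<iota> (?a k j) * ?M k j)
        - (\<Sum>k\<in>{0..Suc n}. \<Sum>j\<in>{0..Suc n}. \<iota> (case j of 0 \<Rightarrow> 0 | Suc i \<Rightarrow> ?a k i * d1 k) * ?M k j)
        + (\<Sum>k\<in>{0..Suc n}. \<Sum>j\<in>{0..Suc n}. \<iota> (case k of 0 \<Rightarrow> 0 | Suc i \<Rightarrow> ?a i j * d2 i) * ?M k j)
      = (\<Sum>k\<in>{0..Suc n}. \<Sum>j\<in>{0..Suc n}. \<iota> (?a k j - (case j of 0 \<Rightarrow> 0 | Suc i \<Rightarrow> ?a k i * d1 k)
            + (case k of 0 \<Rightarrow> 0 | Suc i \<Rightarrow> ?a i j * d2 i)) * ?M k j)"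
    by (simp only: sum.distrib[symmetric] sum_subtractf[symmetric] iadd idiff distrib_right left_diff_distrib)
  also have "\<dots> = SQ (Suc n) (Suc n)"
    unfolding SQ_def d1_def d2_def cc_def
    by (intro sum.cong refl) (simp only: acoef_rec[of n])
  also have "\<dots> = TS (Suc n)" using tri_sq[of "Suc n" "Suc n"] by simp
  finally show ?case .
qed

end


theorem corollary5p9:
  fixes q \<alpha> :: complex
    and \<iota> :: "complex \<Rightarrow> 'a::ring_1"
    and E1 E2 F1 F2 K1 K1i K2 K2i :: 'a
    and act :: "'a \<Rightarrow> 'v::ab_group_add \<Rightarrow> 'v"
    and v :: 'v
    and n :: nat and l :: int and Q :: 'a
  assumes q_nz: "q \<noteq> 0"
    and q_not_root: "\<forall>m::nat. m > 0 \<longrightarrow> q ^ m \<noteq> 1"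
    and alpha_nz: "\<alpha> \<noteq> 0"
    and scal: "scalar_embedding \<iota>"
    and rels: "jimbo_sl3 q \<iota> E1 E2 F1 F2 K1 K1i K2 K2i"
    and modl: "left_module act"
    and whit1: "act E1 v = act (\<iota> \<alpha>) v"
    and whit2: "act E2 v = 0"
    and Q_in: "Q \<in> kc_alg \<iota> (K1 * K2 ^ 2) (K1i * K2i ^ 2)
                  (F1 * E1 + \<iota> (1 / (q - inverse q) ^ 2) * (\<iota> q * K1 + \<iota> (inverse q) * K1i))"
  shows
    "(let F3 = F1 * F2 - \<iota> q * F2 * F1;
          Ki = K1i * K2i ^ 2;
          g = F2 * (1 - \<iota> (inverse q ^ 2) * K2 ^ 2 * Ki ^ 2)
              + \<iota> (\<alpha> * (1 - inverse q ^ 2)) * F3 * Ki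
      in act (\<iota> (q powi (2 * int n * l)) * zpow K2 K2i l *
              (\<Sum>k\<in>{0..n}. \<Sum>j\<in>{0..n - k}.
                 \<iota> (acoef q \<alpha> n k j) * F2 ^ (n - k) * F3 ^ k * K2 ^ (2 * j) * Ki ^ (2 * j + k) * Q)) v
         = act (\<iota> (q powi (2 * int n * l)) * zpow K2 K2i l * g ^ n * Q) v)"
  proof -
  interpret A: alg_ctx q \<alpha> \<iota> E1 E2 F1 F2 K1 K1i K2 K2i "F1 * F2 - \<iota> q * F2 * F1" "K1i * K2i ^ 2"
    by (unfold_locales) (use q_nz q_not_root alpha_nz scal rels in auto)
  let ?F3 = "F1 * F2 - \<iota> q * F2 * F1"
  let ?Ki = "K1i * K2i ^ 2"
  have e: "(\<Sum>k\<in>{0..n}. \<Sum>j\<in>{0..n - k}.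
                 \<iota> (acoef q \<alpha> n k j) * F2 ^ (n - k) * ?F3 ^ k * K2 ^ (2 * j) * ?Ki ^ (2 * j + k) * Q)
        = A.gg ^ n * Q"
    unfolding A.gg_pow A.TS_def by (simp add: sum_distrib_right)
  show ?thesis unfolding Let_def e A.gg_def by (simp add: mult.assoc)
qed

end
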